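(* Let $S=\langle P,\varphi\rangle$ be a SUT model, $t$ a strength and $N\ge 1$ an integer. The propositional formula $Sat_{CX}^{N,t,S}=X\wedge C\wedge CX\wedge SUTX$ (defined in the context) is satisfiable if and only if a covering array $CA(N;t,S)$ exists.
   Context: A SUT model is $S=\langle P,\varphi\rangle$, where $P$ is a finite set of parameters, each $p\in P$ having a finite nonempty domain $d(p)$, and $\varphi$ is a propositional formula whose atoms have the form $(p=v)$ with $p\in P$, $v\in d(p)$. A test case is a full assignment $A$ giving each $p\in P$ a value in $d(p)$ such that $\varphi$ evaluates to true when each atom $(p=v)$ is read as true iff $A(p)=v$; it is assumed that at least one test case exists. Fix a strength $t$ with $1\le t\le |P|$. A $t$-tuple is an assignment of values (from their domains) to exactly $t$ distinct parameters, viewed as a set of pairs $(p,v)$. A test case covers a $t$-tuple $\tau$ if it assigns $v$ to $p$ for every $(p,v)\in\tau$. A $t$-tuple is allowed if some test case covers it (forbidden otherwise); $\mathcal{T}_a$ denotes the set of allowed $t$-tuples. A covering array $CA(N;t,S)$ is a list of $N$ test cases (repetitions allowed) such that every allowed $t$-tuple is covered by at least one of them. Write $[N]=\{1,\dots,N\}$. Propositional variables: $x_{i,p,v}$ for $i\in[N]$, $p\in P$, $v\in d(p)$ (meaning "test $i$ assigns $v$ to $p$"), and $c^i_\tau$ for $i\in[N]$, $\tau\in\mathcal T_a$. Constraints (each read as a Boolean constraint; any CNF translation, possibly with auxiliary variables, preserving satisfiability may be used): (X) for every $i\in[N]$ and $p\in P$: exactly one of $\{x_{i,p,v}: v\in d(p)\}$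 is true; (SUTX) for every $i\in[N]$: the formula $\varphi_i$ obtained from $\varphi$ by replacing every atom $(p=v)$ with $x_{i,p,v}$; (CX) for every $i\in[N]$, $\tau\in\mathcal T_a$, $(p,v)\in\tau$: $c^i_\tau\rightarrow x_{i,p,v}$; (C) for every $\tau\in\mathcal T_a$: $\bigvee_{i\in[N]} c^i_\tau$. *)

theory Defs
  imports Main
begin

datatype 'a pform =
    Atom 'a
  | PTrue
  | PFalse
  | PNot "'a pform"
  | PAnd "'a pform" "'a pform"
  | POr "'a pform" "'a pform"
  | PImp "'a pform" "'a pform"
  | Conj "'a pform list"
  | Disj "'a pform list"

fun peval :: "('a \<Rightarrow> bool) \<Rightarrow> 'a pform \<Rightarrow> bool" where
  "peval \<alpha> (Atom a) = \<alpha> a"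
| "peval \<alpha> PTrue = True"
| "peval \<alpha> PFalse = False"
| "peval \<alpha> (PNot f) = (\<not> peval \<alpha> f)"
| "peval \<alpha> (PAnd f g) = (peval \<alpha> f \<and> peval \<alpha> g)"
| "peval \<alpha> (POr f g) = (peval \<alpha> f \<or> peval \<alpha> g)"
| "peval \<alpha> (PImp f g) = (peval \<alpha> f \<longrightarrow> peval \<alpha> g)"
| "peval \<alpha> (Conj fs) = (\<forall>f\<in>set fs. peval \<alpha> f)"
| "peval \<alpha> (Disj fs) = (\<exists>f\<in>set fs. peval \<alpha> f)"

definition satisfiable :: "'a pform \<Rightarrow> bool" where
  "satisfiable f \<longleftrightarrow> (\<exists>\<alpha>. peval \<alpha> f)"

definition exactly_one :: "'a pform list \<Rightarrow> 'a pform" where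
  "exactly_one fs = PAnd (Disj fs)
     (Conj [PNot (PAnd (fs ! j) (fs ! k)). j \<leftarrow> [0..<length fs], k \<leftarrow> [0..<length fs], j < k])"

definition list_of :: "'a set \<Rightarrow> 'a list" where
  "list_of A = (SOME xs. set xs = A \<and> distinct xs)"

text \<open>A SUT model: a parameter set P, domains d, and a constraint formula phi
  whose atoms (p,v) stand for (p = v).\<close>
definition sut_model :: "'p set \<Rightarrow> ('p \<Rightarrow> 'v set) \<Rightarrow> ('p \<times> 'v) pform \<Rightarrow> bool" where
  "sut_model P d phi \<longleftrightarrow> finite P \<and> (\<forall>p\<in>P. finite (d p) \<and> d p \<noteq> {})
     \<and> set_pform phi \<subseteq> Sigma P d"

definition test_case :: "'p set \<Rightarrow> ('p \<Rightarrow> 'v set) \<Rightarrow> ('p \<times> 'v) pform \<Rightarrow> ('p \<Rightarrow> 'v) \<Rightarrow> bool" where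
  "test_case P d phi A \<longleftrightarrow> (\<forall>p\<in>P. A p \<in> d p) \<and> peval (\<lambda>(p, v). A p = v) phi"

text \<open>A t-tuple: assignment of domain values to exactly t distinct parameters,
  viewed as a set of pairs.\<close>
definition t_tuple :: "'p set \<Rightarrow> ('p \<Rightarrow> 'v set) \<Rightarrow> nat \<Rightarrow> ('p \<times> 'v) set \<Rightarrow> bool" where
  "t_tuple P d t \<tau> \<longleftrightarrow> \<tau> \<subseteq> Sigma P d \<and> finite \<tau> \<and> card \<tau> = t \<and> card (fst ` \<tau>) = t"

definition covers :: "('p \<Rightarrow> 'v) \<Rightarrow> ('p \<times> 'v) set \<Rightarrow> bool" where
  "covers A \<tau> \<longleftrightarrow> (\<forall>(p, v)\<in>\<tau>. A p = v)"

definition allowed_tuples :: "'p set \<Rightarrow> ('p \<Rightarrow> 'v set) \<Rightarrow> ('p \<times> 'v) pform \<Rightarrow> nat \<Rightarrow> ('p \<times> 'v) set set" where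
  "allowed_tuples P d phi t = {\<tau>. t_tuple P d t \<tau> \<and> (\<exists>A. test_case P d phi A \<and> covers A \<tau>)}"

definition covering_array :: "nat \<Rightarrow> nat \<Rightarrow> 'p set \<Rightarrow> ('p \<Rightarrow> 'v set) \<Rightarrow> ('p \<times> 'v) pform \<Rightarrow> ('p \<Rightarrow> 'v) list \<Rightarrow> bool" where
  "covering_array N t P d phi As \<longleftrightarrow> length As = N \<and> (\<forall>A\<in>set As. test_case P d phi A)
     \<and> (\<forall>\<tau>\<in>allowed_tuples P d phi t. \<exists>A\<in>set As. covers A \<tau>)"

datatype ('p, 'v) cvar = X nat 'p 'v | C nat "('p \<times> 'v) set"

definition Sat_CX :: "nat \<Rightarrow> nat \<Rightarrow> 'p set \<Rightarrow> ('p \<Rightarrow> 'v set) \<Rightarrow> ('p \<times> 'v) pform \<Rightarrow> ('p, 'v) cvar pform" where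
  "Sat_CX N t P d phi =
    (let Ns = [1..<Suc N]; Ta = list_of (allowed_tuples P d phi t) in
     Conj [
       \<comment> \<open>(X)\<close>
       Conj [exactly_one [Atom (X i p v). v \<leftarrow> list_of (d p)]. i \<leftarrow> Ns, p \<leftarrow> list_of P],
       \<comment> \<open>(C)\<close>
       Conj [Disj [Atom (C i \<tau>). i \<leftarrow> Ns]. \<tau> \<leftarrow> Ta],
       \<comment> \<open>(CX)\<close>
       Conj [PImp (Atom (C i \<tau>)) (Atom (X i (fst pv) (snd pv))). i \<leftarrow> Ns, \<tau> \<leftarrow> Ta, pv \<leftarrow> list_of \<tau>],
       \<comment> \<open>(SUTX)\<close>
       Conj [map_pform (\<lambda>(p, v). X i p v) phi. i \<leftarrow> Ns]])"

end

theory Submission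
  imports Defs
begin

lemma peval_map: "peval \<alpha> (map_pform f \<phi>) = peval (\<alpha> \<circ> f) \<phi>"
  by (induction \<phi>) auto

lemma peval_cong: "(\<And>a. a \<in> set_pform \<phi> \<Longrightarrow> \<alpha> a = \<beta> a) \<Longrightarrow> peval \<alpha> \<phi> = peval \<beta> \<phi>"
  by (induction \<phi>) auto

lemma list_of: "finite A \<Longrightarrow> set (list_of A) = A \<and> distinct (list_of A)"
  unfolding list_of_def by (rule someI_ex) (rule finite_distinct_list)

lemma exactly_one_iff: "peval \<alpha> (exactly_one fs) \<longleftrightarrow>
   (\<exists>f\<in>set fs. peval \<alpha> f) \<and> (\<forall>j k. j < k \<and> k < length fs \<longrightarrow> \<not> (peval \<alpha> (fs!j) \<and> peval \<alpha> (fs!k)))"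
  unfolding exactly_one_def by auto

lemma exactly_one_map_unique:
  assumes "peval \<alpha> (exactly_one (map f xs))" "distinct xs" "x \<in> set xs" "y \<in> set xs"
    "peval \<alpha> (f x)" "peval \<alpha> (f y)"
  shows "x = y"
proof (rule ccontr)
  assume ne: "x \<noteq> y"
  obtain j where j: "j < length xs" "xs!j = x" using assms(3) by (meson in_set_conv_nth)
  obtain k where k: "k < length xs" "xs!k = y" using assms(4) by (meson in_set_conv_nth)
  have "j \<noteq> k" using ne j k by auto
  have H: "\<forall>j k. j < k \<and> k < length xs \<longrightarrow> \<not> (peval \<alpha> (f (xs!j)) \<and> peval \<alpha> (f (xs!k)))"
    using assms(1) unfolding exactly_one_iff by auto
  show False
  proof (cases "j < k")
    case True then show ?thesis using H j k assms(5,6) by blast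
  next
    case False then have "k < j" using \<open>j \<noteq> k\<close> by auto
    then show ?thesis using H j k assms(5,6) by blast
  qed
qed

theorem proposition1:
  fixes P :: "'p set" and d :: "'p \<Rightarrow> 'v set" and phi :: "('p \<times> 'v) pform"
    and t N :: nat
  assumes "sut_model P d phi"
    and "\<exists>A. test_case P d phi A"
    and "1 \<le> t" and "t \<le> card P"
    and "1 \<le> N"
  shows "satisfiable (Sat_CX N t P d phi) \<longleftrightarrow> (\<exists>As. covering_array N t P d phi As)"
proof -
  have finP: "finite P" and find: "\<And>p. p \<in> P \<Longrightarrow> finite (d p)"
    and atoms: "set_pform phi \<subseteq> Sigma P d"
    using assms(1) unfolding sut_model_def by auto
  have finS: "finite (Sigma P d)" using finP find by auto
  have finT: "finite (allowed_tuples P d phi t)"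
    by (rule finite_subset[of _ "Pow (Sigma P d)"])
       (use finS in \<open>auto simp: allowed_tuples_def t_tuple_def\<close>)
  have tupS: "\<And>\<tau>. \<tau> \<in> allowed_tuples P d phi t \<Longrightarrow> \<tau> \<subseteq> Sigma P d \<and> finite \<tau>"
    by (auto simp: allowed_tuples_def t_tuple_def)
  note LP = list_of[OF finP] and LT = list_of[OF finT]
  have LD: "\<And>p. p \<in> P \<Longrightarrow> set (list_of (d p)) = d p \<and> distinct (list_of (d p))"
    using list_of find by blast
  have Ltau: "\<And>\<tau>. \<tau> \<in> allowed_tuples P d phi t \<Longrightarrow> set (list_of \<tau>) = \<tau>"
    using list_of tupS by blast
  show ?thesis
  proof
    assume "satisfiable (Sat_CX N t P d phi)"
    then obtain \<alpha> where a: "peval \<alpha> (Sat_CX N t P d phi)" unfolding satisfiable_def by blast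
    have a4: "(\<forall>i\<in>set [1..<Suc N]. \<forall>p\<in>set (list_of P). peval \<alpha> (exactly_one (map (\<lambda>v. Atom (X i p v)) (list_of (d p)))))
      \<and> (\<forall>\<tau>\<in>set (list_of (allowed_tuples P d phi t)). \<exists>i\<in>set [1..<Suc N]. \<alpha> (C i \<tau>))
      \<and> (\<forall>i\<in>set [1..<Suc N]. \<forall>\<tau>\<in>set (list_of (allowed_tuples P d phi t)). \<forall>pv\<in>set (list_of \<tau>). \<alpha> (C i \<tau>) \<longrightarrow> \<alpha> (X i (fst pv) (snd pv)))
      \<and> (\<forall>i\<in>set [1..<Suc N]. peval \<alpha> (map_pform (\<lambda>(p, v). X i p v) phi))"
      using a unfolding Sat_CX_def Let_def by (simp del: upt_Suc set_upt)
    have aX: "\<And>i p. i \<in> {1..N} \<Longrightarrow> p \<in> P \<Longrightarrow>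
        peval \<alpha> (exactly_one (map (\<lambda>v. Atom (X i p v)) (list_of (d p))))"
      using a4 LP by (auto simp: Suc_le_eq)
    have aC: "\<And>\<tau>. \<tau> \<in> allowed_tuples P d phi t \<Longrightarrow> \<exists>i\<in>{1..N}. \<alpha> (C i \<tau>)"
    proof -
      fix \<tau> assume "\<tau> \<in> allowed_tuples P d phi t"
      moreover have "set [1..<Suc N] = {1..N}" by auto
      ultimately show "\<exists>i\<in>{1..N}. \<alpha> (C i \<tau>)" using a4 LT[THEN conjunct1] by metis
    qed
    have aCX: "\<And>i \<tau> p v. i \<in> {1..N} \<Longrightarrow> \<tau> \<in> allowed_tuples P d phi t \<Longrightarrow> (p,v) \<in> \<tau> \<Longrightarrow>
         \<alpha> (C i \<tau>) \<Longrightarrow> \<alpha> (X i p v)"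
    proof -
      fix i \<tau> p v assume h: "i \<in> {1..N}" "\<tau> \<in> allowed_tuples P d phi t" "(p,v) \<in> \<tau>" "\<alpha> (C i \<tau>)"
      have "(p,v) \<in> set (list_of \<tau>)" using Ltau h by auto
      then show "\<alpha> (X i p v)" using a4 LT h by (force simp: Suc_le_eq)
    qed
    have aS: "\<And>i. i \<in> {1..N} \<Longrightarrow> peval (\<alpha> \<circ> (\<lambda>(p, v). X i p v)) phi"
      using a4 by (auto simp: Suc_le_eq peval_map)
    define Ai where "Ai i p = (SOME v. v \<in> d p \<and> \<alpha> (X i p v))" for i p
    have Aiprop: "Ai i p \<in> d p \<and> \<alpha> (X i p (Ai i p))" if "i \<in> {1..N}" "p \<in> P" for i p
    proof -
      have "\<exists>v\<in>set (list_of (d p)). \<alpha> (X i p v)"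
        using aX[OF that] unfolding exactly_one_iff by auto
      then have "\<exists>v. v \<in> d p \<and> \<alpha> (X i p v)" using LD[OF that(2)] by auto
      then show ?thesis unfolding Ai_def by (rule someI_ex)
    qed
    have Aiiff: "Ai i p = v \<longleftrightarrow> \<alpha> (X i p v)" if "i \<in> {1..N}" "p \<in> P" "v \<in> d p" for i p v
    proof
      assume "Ai i p = v" then show "\<alpha> (X i p v)" using Aiprop[OF that(1,2)] by auto
    next
      assume av: "\<alpha> (X i p v)"
      show "Ai i p = v"
        using exactly_one_map_unique[OF aX[OF that(1,2)], of "Ai i p" v] LD[OF that(2)]
          Aiprop[OF that(1,2)] av that(3) by auto
    qed
    define As where "As = map Ai [1..<Suc N]"
    have tc: "test_case P d phi (Ai i)" if "i \<in> {1..N}" for i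
    proof -
      have "peval (\<lambda>(p, v). Ai i p = v) phi = peval (\<alpha> \<circ> (\<lambda>(p, v). X i p v)) phi"
        by (rule peval_cong) (use atoms Aiiff[OF that] in auto)
      then show ?thesis unfolding test_case_def using aS[OF that] Aiprop[OF that] by auto
    qed
    have "covering_array N t P d phi As"
      unfolding covering_array_def
    proof (intro conjI ballI)
      show "length As = N" by (simp add: As_def)
    next
      fix A assume "A \<in> set As" then show "test_case P d phi A"
        using tc by (auto simp: As_def Suc_le_eq)
    next
      fix \<tau> assume ht: "\<tau> \<in> allowed_tuples P d phi t"
      obtain i where i: "i \<in> {1..N}" "\<alpha> (C i \<tau>)" using aC[OF ht] by blast
      have "covers (Ai i) \<tau>" unfolding covers_def
      proof (clarify)
        fix p v assume pv: "(p,v) \<in> \<tau>"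
        then have "p \<in> P" "v \<in> d p" using tupS[OF ht] by auto
        then show "Ai i p = v" using Aiiff[OF i(1)] aCX[OF i(1) ht pv i(2)] by auto
      qed
      moreover have "Ai i \<in> set As" using i by (auto simp: As_def simp del: upt_Suc)
      ultimately show "\<exists>A\<in>set As. covers A \<tau>" by blast
    qed
    then show "\<exists>As. covering_array N t P d phi As" by blast
  next
    assume "\<exists>As. covering_array N t P d phi As"
    then obtain As where ca: "covering_array N t P d phi As" by blast
    have len: "length As = N" and tcs: "\<And>A. A \<in> set As \<Longrightarrow> test_case P d phi A"
      and cov: "\<And>\<tau>. \<tau> \<in> allowed_tuples P d phi t \<Longrightarrow> \<exists>A\<in>set As. covers A \<tau>"
      using ca unfolding covering_array_def by auto
    define \<alpha> where "\<alpha> x = (case x of X i p v \<Rightarrow> (As!(i-1)) p = v | C i \<tau> \<Rightarrow> covers (As!(i-1)) \<tau>)" for x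
    have mem: "As!(i-1) \<in> set As" if "i \<in> set [1..<Suc N]" for i
      using that len by auto
    have X1: "peval \<alpha> (exactly_one (map (\<lambda>v. Atom (X i p v)) (list_of (d p))))"
      if "i \<in> set [1..<Suc N]" "p \<in> P" for i p
    proof -
      let ?A = "As!(i-1)"
      have "?A p \<in> d p" using tcs[OF mem[OF that(1)]] that(2) unfolding test_case_def by auto
      then have e: "\<exists>f\<in>set (map (\<lambda>v. Atom (X i p v)) (list_of (d p))). peval \<alpha> f"
        using LD[OF that(2)] by (auto simp: \<alpha>_def)
      have u: "\<not> (peval \<alpha> (map (\<lambda>v. Atom (X i p v)) (list_of (d p)) ! j) \<and>
                  peval \<alpha> (map (\<lambda>v. Atom (X i p v)) (list_of (d p)) ! k))"
        if "j < k" "k < length (list_of (d p))" for j k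
      proof -
        have "list_of (d p) ! j \<noteq> list_of (d p) ! k"
          using LD[OF \<open>p \<in> P\<close>] that by (simp add: nth_eq_iff_index_eq)
        then show ?thesis using that by (auto simp: \<alpha>_def)
      qed
      show ?thesis unfolding exactly_one_iff using e u by auto
    qed
    have C1: "\<exists>i\<in>set [1..<Suc N]. \<alpha> (C i \<tau>)" if ht: "\<tau> \<in> allowed_tuples P d phi t" for \<tau>
    proof -
      obtain A where "A \<in> set As" "covers A \<tau>" using cov[OF ht] by blast
      then obtain k where k: "k < N" "As!k = A" using len by (auto simp: in_set_conv_nth)
      show ?thesis using k \<open>covers A \<tau>\<close> by (intro bexI[of _ "Suc k"]) (auto simp: \<alpha>_def)
    qed
    have CX1: "\<alpha> (C i \<tau>) \<longrightarrow> \<alpha> (X i (fst pv) (snd pv))"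
      if "\<tau> \<in> allowed_tuples P d phi t" "pv \<in> set (list_of \<tau>)" for i \<tau> pv
      using that Ltau[OF that(1)] by (auto simp: \<alpha>_def covers_def)
    have S1: "peval \<alpha> (map_pform (\<lambda>(p, v). X i p v) phi)" if "i \<in> set [1..<Suc N]" for i
    proof -
      have "peval (\<alpha> \<circ> (\<lambda>(p, v). X i p v)) phi = peval (\<lambda>(p, v). (As!(i-1)) p = v) phi"
        by (rule peval_cong) (auto simp: \<alpha>_def)
      then show ?thesis using tcs[OF mem[OF that]] unfolding test_case_def peval_map by auto
    qed
    have "peval \<alpha> (Sat_CX N t P d phi)"
      unfolding Sat_CX_def Let_def
      using X1 C1 CX1 S1 LP LT by (simp del: upt_Suc set_upt)
    then show "satisfiable (Sat_CX N t P d phi)" unfolding satisfiable_def by blast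
  qed
qed

end
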